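(* Let $k_1,k_2,m$ be positive integers and $\phi_1\in J_{k_1,m}$, $\phi_2\in J_{k_2,m}$ (classical Jacobi forms). Define $$H(\phi_1,\phi_2)(\tau,z_1,z_2)=\sum_{\epsilon\in\mathcal O_K^\times}\Bigl(\phi_1\bigl(\tau,\tfrac12(z_1+z_2)\bigr)\,\phi_2\bigl(\tau,\tfrac i2(z_1-z_2)\bigr)\Bigr)\Big|_{k_1+k_2}\epsilon I.$$ Then $H(\phi_1,\phi_2)\in J^1_{k_1+k_2,m}(\mathcal O_K)$. If moreover $\phi_1,\phi_2$ are cusp forms, then $H(\phi_1,\phi_2)$ is a cusp form.
   Context: Notation: $\mathcal H$ is the upper half plane, $e(x)=e^{2\pi i x}$, $K=\mathbb Q(i)$, $\mathcal O_K=\mathbb Z[i]$, $\mathcal O_K^\times=\{\pm1,\pm i\}$, $N(x)=x\bar x$, $\mathcal O_K^\sharp=\frac i2\mathcal O_K$. $J_{k,m}$ denotes the space of classical (Eichler–Zagier) Jacobi forms of weight $k$ and index $m$ on $SL(2,\mathbb Z)\ltimes\mathbb Z^2$. For a function $\psi$ on $\mathcal H\times\mathbb C^2$ and $\epsilon\in\mathcal O_K^\times$, $(\psi|_k\epsilon I)(\tau,z_1,z_2)=\epsilon^{-k}\psi(\tau,\epsilon z_1,\bar\epsilon z_2)$. For $M=\begin{pmatrix}a&b\\c&d\end{pmatrix}\in SL(2,\mathbb Z)$, $(\phi|_{k,m}M)(\tau,z_1,z_2)=(c\tau+d)^{-k}e^{-2\pi i m c z_1z_2/(c\tau+d)}\phi\bigl(M\tau,\tfrac{z_1}{c\tau+d},\tfrac{z_2}{c\tau+d}\bigr)$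 and for $\lambda,\mu\in\mathcal O_K$, $(\phi|_m[\lambda,\mu])(\tau,z_1,z_2)=e^{2\pi i m(N(\lambda)\tau+\bar\lambda z_1+\lambda z_2)}\phi(\tau,z_1+\lambda\tau+\mu,z_2+\bar\lambda\tau+\bar\mu)$. $J^1_{k,m}(\mathcal O_K)$ is the space of holomorphic $\phi:\mathcal H\times\mathbb C^2\to\mathbb C$ with $\phi|_{k,m}M=\phi$ for all $M\in SL(2,\mathbb Z)$, $\phi|_m[\lambda,\mu]=\phi$ for all $\lambda,\mu\in\mathcal O_K$, and with a Fourier expansion $\phi=\sum_{n\ge0}\sum_{r\in\mathcal O_K^\sharp,\,nm\ge N(r)}c_\phi(n,r)e(n\tau+rz_1+\bar rz_2)$; it is a cusp form if $c_\phi(n,r)=0$ whenever $nm=N(r)$. *)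

theory Defs
  imports "HOL-Analysis.Analysis"
begin

definition e :: "complex \<Rightarrow> complex" where
  "e x = exp (2 * of_real pi * \<i> * x)"

definition upper_half_plane :: "complex set" where
  "upper_half_plane = {\<tau>. Im \<tau> > 0}"

definition gauss_ints :: "complex set" where
  "gauss_ints = {z. Re z \<in> \<int> \<and> Im z \<in> \<int>}"

definition gauss_units :: "complex set" where
  "gauss_units = {1, -1, \<i>, -\<i>}"

definition OK_sharp :: "complex set" where
  "OK_sharp = (\<lambda>x. (\<i> / 2) * x) ` gauss_ints"

definition normK :: "complex \<Rightarrow> complex" where
  "normK x = x * cnj x"

definition holomorphic2 :: "(complex \<Rightarrow> complex \<Rightarrow> complex) \<Rightarrow> bool" where
  "holomorphic2 f \<longleftrightarrow>
     (\<forall>p \<in> upper_half_plane \<times> UNIV. \<exists>A B.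
        ((\<lambda>(t, z). f t z) has_derivative (\<lambda>(h1, h2). A * h1 + B * h2)) (at p))"

definition holomorphic3 :: "(complex \<Rightarrow> complex \<Rightarrow> complex \<Rightarrow> complex) \<Rightarrow> bool" where
  "holomorphic3 f \<longleftrightarrow>
     (\<forall>p \<in> upper_half_plane \<times> UNIV \<times> UNIV. \<exists>A B C.
        ((\<lambda>(t, z1, z2). f t z1 z2) has_derivative (\<lambda>(h1, h2, h3). A * h1 + B * h2 + C * h3)) (at p))"

definition slash_classical ::
  "nat \<Rightarrow> nat \<Rightarrow> int \<Rightarrow> int \<Rightarrow> int \<Rightarrow> int \<Rightarrow> (complex \<Rightarrow> complex \<Rightarrow> complex) \<Rightarrow> complex \<Rightarrow> complex \<Rightarrow> complex" where
  "slash_classical k m a b c d \<phi> \<tau> z =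
     inverse ((of_int c * \<tau> + of_int d) ^ k)
     * e (- of_nat m * of_int c * z ^ 2 / (of_int c * \<tau> + of_int d))
     * \<phi> ((of_int a * \<tau> + of_int b) / (of_int c * \<tau> + of_int d)) (z / (of_int c * \<tau> + of_int d))"

definition fourier_classical :: "nat \<Rightarrow> (nat \<times> int \<Rightarrow> complex) \<Rightarrow> (complex \<Rightarrow> complex \<Rightarrow> complex) \<Rightarrow> bool" where
  "fourier_classical m c \<phi> \<longleftrightarrow>
     (\<forall>\<tau> \<in> upper_half_plane. \<forall>z.
        ((\<lambda>(n, r). c (n, r) * e (of_nat n * \<tau> + of_int r * z)) has_sum \<phi> \<tau> z)
          {(n, r). r ^ 2 \<le> 4 * int n * int m})"

definition jacobi_form :: "nat \<Rightarrow> nat \<Rightarrow> (complex \<Rightarrow> complex \<Rightarrow> complex) \<Rightarrow> bool" where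
  "jacobi_form k m \<phi> \<longleftrightarrow>
     holomorphic2 \<phi>
     \<and> (\<forall>a b c d. a * d - b * c = 1 \<longrightarrow>
          (\<forall>\<tau> \<in> upper_half_plane. \<forall>z. slash_classical k m a b c d \<phi> \<tau> z = \<phi> \<tau> z))
     \<and> (\<forall>l u :: int. \<forall>\<tau> \<in> upper_half_plane. \<forall>z.
          e (of_nat m * (of_int (l ^ 2) * \<tau> + 2 * of_int l * z))
            * \<phi> \<tau> (z + of_int l * \<tau> + of_int u) = \<phi> \<tau> z)
     \<and> (\<exists>c. fourier_classical m c \<phi>)"

definition jacobi_cusp_form :: "nat \<Rightarrow> nat \<Rightarrow> (complex \<Rightarrow> complex \<Rightarrow> complex) \<Rightarrow> bool" where
  "jacobi_cusp_form k m \<phi> \<longleftrightarrow>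
     jacobi_form k m \<phi>
     \<and> (\<exists>c. fourier_classical m c \<phi> \<and> (\<forall>n r. 4 * int n * int m = r ^ 2 \<longrightarrow> c (n, r) = 0))"

definition slash_unit :: "nat \<Rightarrow> complex \<Rightarrow> (complex \<Rightarrow> complex \<Rightarrow> complex \<Rightarrow> complex) \<Rightarrow> complex \<Rightarrow> complex \<Rightarrow> complex \<Rightarrow> complex" where
  "slash_unit k \<epsilon> \<psi> \<tau> z1 z2 = inverse (\<epsilon> ^ k) * \<psi> \<tau> (\<epsilon> * z1) (cnj \<epsilon> * z2)"

definition slash_herm ::
  "nat \<Rightarrow> nat \<Rightarrow> int \<Rightarrow> int \<Rightarrow> int \<Rightarrow> int \<Rightarrow> (complex \<Rightarrow> complex \<Rightarrow> complex \<Rightarrow> complex) \<Rightarrow> complex \<Rightarrow> complex \<Rightarrow> complex \<Rightarrow> complex" where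
  "slash_herm k m a b c d \<phi> \<tau> z1 z2 =
     inverse ((of_int c * \<tau> + of_int d) ^ k)
     * e (- of_nat m * of_int c * z1 * z2 / (of_int c * \<tau> + of_int d))
     * \<phi> ((of_int a * \<tau> + of_int b) / (of_int c * \<tau> + of_int d))
         (z1 / (of_int c * \<tau> + of_int d)) (z2 / (of_int c * \<tau> + of_int d))"

definition fourier_herm :: "nat \<Rightarrow> (nat \<times> complex \<Rightarrow> complex) \<Rightarrow> (complex \<Rightarrow> complex \<Rightarrow> complex \<Rightarrow> complex) \<Rightarrow> bool" where
  "fourier_herm m c \<phi> \<longleftrightarrow>
     (\<forall>\<tau> \<in> upper_half_plane. \<forall>z1 z2.
        ((\<lambda>(n, r). c (n, r) * e (of_nat n * \<tau> + r * z1 + cnj r * z2)) has_sum \<phi> \<tau> z1 z2)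
          {(n, r). r \<in> OK_sharp \<and> Re (normK r) \<le> real (n * m)})"

definition herm_jacobi_form :: "nat \<Rightarrow> nat \<Rightarrow> (complex \<Rightarrow> complex \<Rightarrow> complex \<Rightarrow> complex) \<Rightarrow> bool" where
  "herm_jacobi_form k m \<phi> \<longleftrightarrow>
     holomorphic3 \<phi>
     \<and> (\<forall>a b c d. a * d - b * c = 1 \<longrightarrow>
          (\<forall>\<tau> \<in> upper_half_plane. \<forall>z1 z2. slash_herm k m a b c d \<phi> \<tau> z1 z2 = \<phi> \<tau> z1 z2))
     \<and> (\<forall>l \<in> gauss_ints. \<forall>u \<in> gauss_ints. \<forall>\<tau> \<in> upper_half_plane. \<forall>z1 z2.
          e (of_nat m * (normK l * \<tau> + cnj l * z1 + l * z2))
            * \<phi> \<tau> (z1 + l * \<tau> + u) (z2 + cnj l * \<tau> + cnj u) = \<phi> \<tau> z1 z2)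
     \<and> (\<exists>c. fourier_herm m c \<phi>)"

definition herm_jacobi_cusp_form :: "nat \<Rightarrow> nat \<Rightarrow> (complex \<Rightarrow> complex \<Rightarrow> complex \<Rightarrow> complex) \<Rightarrow> bool" where
  "herm_jacobi_cusp_form k m \<phi> \<longleftrightarrow>
     herm_jacobi_form k m \<phi>
     \<and> (\<exists>c. fourier_herm m c \<phi> \<and> (\<forall>n r. Re (normK r) = real (n * m) \<longrightarrow> c (n, r) = 0))"

definition H_lift :: "nat \<Rightarrow> (complex \<Rightarrow> complex \<Rightarrow> complex) \<Rightarrow> (complex \<Rightarrow> complex \<Rightarrow> complex)
    \<Rightarrow> complex \<Rightarrow> complex \<Rightarrow> complex \<Rightarrow> complex" where
  "H_lift k \<phi>1 \<phi>2 \<tau> z1 z2 =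
     (\<Sum>\<epsilon> \<in> gauss_units.
        slash_unit k \<epsilon> (\<lambda>t w1 w2. \<phi>1 t ((w1 + w2) / 2) * \<phi>2 t (\<i> / 2 * (w1 - w2))) \<tau> z1 z2)"

end

theory Submission
  imports Defs
begin


lemma e_add: "e x * e y = e (x + y)"
  by (simp add: e_def distrib_left exp_add)

lemma normK_mult: "normK (a * b) = normK a * normK b"
  by (simp add: normK_def)

lemma Re_normK: "Re (normK z) = (Re z)^2 + (Im z)^2"
  by (simp add: normK_def complex_mult_cnj)

lemma gauss_units_cnj: "\<epsilon> \<in> gauss_units \<Longrightarrow> \<epsilon> * cnj \<epsilon> = 1"
  by (auto simp: gauss_units_def)

lemma gauss_units_cnj': "\<epsilon> \<in> gauss_units \<Longrightarrow> cnj \<epsilon> * \<epsilon> = 1"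
  by (auto simp: gauss_units_def)

lemma gauss_units_normK: "\<epsilon> \<in> gauss_units \<Longrightarrow> normK \<epsilon> = 1"
  by (auto simp: gauss_units_def normK_def)

lemma gauss_units_ne0: "\<epsilon> \<in> gauss_units \<Longrightarrow> \<epsilon> \<noteq> 0"
  by (auto simp: gauss_units_def)

lemma gauss_ints_mult: "a \<in> gauss_ints \<Longrightarrow> b \<in> gauss_ints \<Longrightarrow> a * b \<in> gauss_ints"
  by (auto simp: gauss_ints_def)

lemma gauss_ints_cnj: "a \<in> gauss_ints \<Longrightarrow> cnj a \<in> gauss_ints"
  by (auto simp: gauss_ints_def)

lemma gauss_units_ints: "\<epsilon> \<in> gauss_units \<Longrightarrow> \<epsilon> \<in> gauss_ints"
  by (auto simp: gauss_units_def gauss_ints_def)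

lemma gauss_units_cnj_mem: "\<epsilon> \<in> gauss_units \<Longrightarrow> cnj \<epsilon> \<in> gauss_units"
  by (auto simp: gauss_units_def)

lemma OK_sharp_mult: "a \<in> gauss_ints \<Longrightarrow> r \<in> OK_sharp \<Longrightarrow> a * r \<in> OK_sharp"
proof -
  assume a: "a \<in> gauss_ints" and "r \<in> OK_sharp"
  then obtain x where x: "x \<in> gauss_ints" "r = \<i>/2 * x" by (auto simp: OK_sharp_def)
  have "a * r = (\<lambda>x. (\<i> / 2) * x) (a * x)" using x by simp
  thus ?thesis unfolding OK_sharp_def using gauss_ints_mult[OF a x(1)] by (rule image_eqI)
qed

lemma gauss_intsE:
  assumes "l \<in> gauss_ints"
  obtains p q :: int where "l = of_int p + \<i> * of_int q"
proof -
  from assms obtain p q where "Re l = of_int p" "Im l = of_int q"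
    by (auto simp: gauss_ints_def elim!: Ints_cases)
  then have "l = of_int p + \<i> * of_int q" by (simp add: complex_eq_iff)
  thus ?thesis using that by blast
qed




definition modinv :: "nat \<Rightarrow> nat \<Rightarrow> (complex \<Rightarrow> complex \<Rightarrow> complex \<Rightarrow> complex) \<Rightarrow> bool" where
  "modinv k m \<psi> \<longleftrightarrow> (\<forall>a b c d. a * d - b * c = 1 \<longrightarrow>
          (\<forall>\<tau> \<in> upper_half_plane. \<forall>z1 z2. slash_herm k m a b c d \<psi> \<tau> z1 z2 = \<psi> \<tau> z1 z2))"

definition transinv :: "nat \<Rightarrow> (complex \<Rightarrow> complex \<Rightarrow> complex \<Rightarrow> complex) \<Rightarrow> bool" where
  "transinv m \<psi> \<longleftrightarrow> (\<forall>l \<in> gauss_ints. \<forall>u \<in> gauss_ints. \<forall>\<tau> \<in> upper_half_plane. \<forall>z1 z2.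
          e (of_nat m * (normK l * \<tau> + cnj l * z1 + l * z2))
            * \<psi> \<tau> (z1 + l * \<tau> + u) (z2 + cnj l * \<tau> + cnj u) = \<psi> \<tau> z1 z2)"

definition fcusp :: "nat \<Rightarrow> (complex \<Rightarrow> complex \<Rightarrow> complex \<Rightarrow> complex) \<Rightarrow> bool" where
  "fcusp m \<psi> \<longleftrightarrow> (\<exists>c. fourier_herm m c \<psi> \<and> (\<forall>n r. Re (normK r) = real (n * m) \<longrightarrow> c (n, r) = 0))"

lemma hjf_iff: "herm_jacobi_form k m \<psi> \<longleftrightarrow> holomorphic3 \<psi> \<and> modinv k m \<psi> \<and> transinv m \<psi> \<and> (\<exists>c. fourier_herm m c \<psi>)"
  unfolding herm_jacobi_form_def modinv_def transinv_def by blast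

lemma hjcf_iff: "herm_jacobi_cusp_form k m \<psi> \<longleftrightarrow> herm_jacobi_form k m \<psi> \<and> fcusp m \<psi>"
  unfolding herm_jacobi_cusp_form_def fcusp_def by blast

lemma holomorphic3_iff: "holomorphic3 f \<longleftrightarrow> (\<forall>t z1 z2. Im t > 0 \<longrightarrow> (\<exists>A B C.
   ((\<lambda>p. f (fst p) (fst (snd p)) (snd (snd p))) has_derivative
     (\<lambda>h. A * fst h + B * fst (snd h) + C * snd (snd h))) (at (t, z1, z2))))"
  unfolding holomorphic3_def upper_half_plane_def by (simp add: case_prod_unfold)

lemma holomorphic2_iff: "holomorphic2 f \<longleftrightarrow> (\<forall>t z. Im t > 0 \<longrightarrow> (\<exists>A B.
   ((\<lambda>p. f (fst p) (snd p)) has_derivative (\<lambda>h. A * fst h + B * snd h)) (at (t, z))))"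
  unfolding holomorphic2_def upper_half_plane_def by (simp add: case_prod_unfold)

lemma hd_eq: "(f has_derivative g) F \<Longrightarrow> (\<And>h. g h = g' h) \<Longrightarrow> (f has_derivative g') F"
proof -
  assume "(f has_derivative g) F" "\<And>h. g h = g' h"
  moreover have "g = g'" using calculation(2) by blast
  ultimately show ?thesis by simp
qed

lemma slash_unit_holo:
  assumes "\<epsilon> \<in> gauss_units" "holomorphic3 \<psi>"
  shows "holomorphic3 (slash_unit k \<epsilon> \<psi>)"
  unfolding holomorphic3_iff
proof (intro allI impI)
  fix t z1 z2 :: complex assume t: "Im t > 0"
  from assms(2) t obtain A B C where d:
    "((\<lambda>p. \<psi> (fst p) (fst (snd p)) (snd (snd p))) has_derivative
     (\<lambda>h. A * fst h + B * fst (snd h) + C * snd (snd h))) (at (t, \<epsilon> * z1, cnj \<epsilon> * z2))"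
    unfolding holomorphic3_iff by blast
  let ?g = "\<lambda>p::complex\<times>complex\<times>complex. (fst p, \<epsilon> * fst (snd p), cnj \<epsilon> * snd (snd p))"
  have g: "(?g has_derivative ?g) (at (t, z1, z2))"
    by (intro derivative_eq_intros) auto
  have "((\<lambda>p. (\<lambda>p. \<psi> (fst p) (fst (snd p)) (snd (snd p))) (?g p)) has_derivative
     (\<lambda>h. (\<lambda>h. A * fst h + B * fst (snd h) + C * snd (snd h)) (?g h))) (at (t, z1, z2))"
    by (rule has_derivative_compose[OF g]) (use d in simp)
  then have "((\<lambda>p. inverse (\<epsilon> ^ k) * (\<lambda>p. \<psi> (fst p) (fst (snd p)) (snd (snd p))) (?g p)) has_derivative
     (\<lambda>h. inverse (\<epsilon> ^ k) * (\<lambda>h. A * fst h + B * fst (snd h) + C * snd (snd h)) (?g h))) (at (t, z1, z2))"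
    by (rule has_derivative_mult_right)
  moreover have "(\<lambda>p. slash_unit k \<epsilon> \<psi> (fst p) (fst (snd p)) (snd (snd p))) = 
      (\<lambda>p. inverse (\<epsilon> ^ k) * (\<lambda>p. \<psi> (fst p) (fst (snd p)) (snd (snd p))) (?g p))"
    by (simp add: slash_unit_def)
  ultimately have "((\<lambda>p. slash_unit k \<epsilon> \<psi> (fst p) (fst (snd p)) (snd (snd p))) has_derivative
     (\<lambda>h. inverse (\<epsilon> ^ k) * (\<lambda>h. A * fst h + B * fst (snd h) + C * snd (snd h)) (?g h))) (at (t, z1, z2))"
    by simp
  then have "((\<lambda>p. slash_unit k \<epsilon> \<psi> (fst p) (fst (snd p)) (snd (snd p))) has_derivative
     (\<lambda>h. (inverse (\<epsilon> ^ k) * A) * fst h + (inverse (\<epsilon> ^ k) * B * \<epsilon>) * fst (snd h)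
         + (inverse (\<epsilon> ^ k) * C * cnj \<epsilon>) * snd (snd h))) (at (t, z1, z2))"
    by (rule hd_eq) (simp add: algebra_simps)
  then show "\<exists>A B C. ((\<lambda>p. slash_unit k \<epsilon> \<psi> (fst p) (fst (snd p)) (snd (snd p))) has_derivative
     (\<lambda>h. A * fst h + B * fst (snd h) + C * snd (snd h))) (at (t, z1, z2))" by blast
qed

lemma slash_unit_modinv:
  assumes "\<epsilon> \<in> gauss_units" "modinv k m \<psi>"
  shows "modinv k m (slash_unit k \<epsilon> \<psi>)"
  unfolding modinv_def
proof (intro allI impI ballI)
  fix a b c d :: int and \<tau> z1 z2 assume abcd: "a * d - b * c = 1" and t: "\<tau> \<in> upper_half_plane"
  let ?D = "of_int c * \<tau> + of_int d"
  have h: "slash_herm k m a b c d \<psi> \<tau> (\<epsilon> * z1) (cnj \<epsilon> * z2) = \<psi> \<tau> (\<epsilon> * z1) (cnj \<epsilon> * z2)"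
    using assms(2) abcd t unfolding modinv_def by blast
  have ee: "\<epsilon> * z1 * (cnj \<epsilon> * z2) = z1 * z2"
    using gauss_units_cnj[OF assms(1)] by (metis mult.assoc mult.commute mult.left_neutral)
  have exeq: "- of_nat m * of_int c * (\<epsilon> * z1) * (cnj \<epsilon> * z2) / ?D = - of_nat m * of_int c * z1 * z2 / ?D"
    using ee by (simp add: mult.assoc)
  have q1: "\<epsilon> * z1 / ?D = \<epsilon> * (z1 / ?D)" "cnj \<epsilon> * z2 / ?D = cnj \<epsilon> * (z2 / ?D)" by simp_all
  have h2: "inverse (?D ^ k) * e (- of_nat m * of_int c * z1 * z2 / ?D) *
      \<psi> ((of_int a * \<tau> + of_int b) / ?D) (\<epsilon> * (z1 / ?D)) (cnj \<epsilon> * (z2 / ?D)) = \<psi> \<tau> (\<epsilon> * z1) (cnj \<epsilon> * z2)"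
    using h unfolding slash_herm_def exeq q1 .
  show "slash_herm k m a b c d (slash_unit k \<epsilon> \<psi>) \<tau> z1 z2 = slash_unit k \<epsilon> \<psi> \<tau> z1 z2"
    unfolding slash_herm_def slash_unit_def
    by (subst h2[symmetric]) (simp only: mult_ac)
qed

lemma slash_unit_transinv:
  assumes "\<epsilon> \<in> gauss_units" "transinv m \<psi>"
  shows "transinv m (slash_unit k \<epsilon> \<psi>)"
  unfolding transinv_def
proof (intro allI impI ballI)
  fix l u \<tau> z1 z2 assume l: "l \<in> gauss_ints" and u: "u \<in> gauss_ints" and t: "\<tau> \<in> upper_half_plane"
  have el: "\<epsilon> * l \<in> gauss_ints" "\<epsilon> * u \<in> gauss_ints"
    using gauss_ints_mult[OF gauss_units_ints[OF assms(1)]] l u by auto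
  have h: "e (of_nat m * (normK (\<epsilon> * l) * \<tau> + cnj (\<epsilon> * l) * (\<epsilon> * z1) + (\<epsilon> * l) * (cnj \<epsilon> * z2)))
            * \<psi> \<tau> (\<epsilon> * z1 + (\<epsilon> * l) * \<tau> + \<epsilon> * u) (cnj \<epsilon> * z2 + cnj (\<epsilon> * l) * \<tau> + cnj (\<epsilon> * u))
        = \<psi> \<tau> (\<epsilon> * z1) (cnj \<epsilon> * z2)"
    using assms(2) el t unfolding transinv_def by blast
  have u1: "\<epsilon> * cnj \<epsilon> = 1" "normK \<epsilon> = 1" using assms(1) gauss_units_cnj gauss_units_normK by auto
  have ex: "normK (\<epsilon> * l) * \<tau> + cnj (\<epsilon> * l) * (\<epsilon> * z1) + (\<epsilon> * l) * (cnj \<epsilon> * z2)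
     = normK l * \<tau> + cnj l * z1 + l * z2"
  proof -
    have "cnj (\<epsilon> * l) * (\<epsilon> * z1) = (\<epsilon> * cnj \<epsilon>) * (cnj l * z1)" by (simp add: mult_ac)
    also have "\<dots> = cnj l * z1" using u1 by simp
    finally have 1: "cnj (\<epsilon> * l) * (\<epsilon> * z1) = cnj l * z1" .
    have "(\<epsilon> * l) * (cnj \<epsilon> * z2) = (\<epsilon> * cnj \<epsilon>) * (l * z2)" by (simp add: mult_ac)
    also have "\<dots> = l * z2" using u1 by simp
    finally have 2: "(\<epsilon> * l) * (cnj \<epsilon> * z2) = l * z2" .
    show ?thesis unfolding 1 2 normK_mult u1 by simp
  qed
  have a1: "\<epsilon> * (z1 + l * \<tau> + u) = \<epsilon> * z1 + (\<epsilon> * l) * \<tau> + \<epsilon> * u" by (simp add: algebra_simps)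
  have a2: "cnj \<epsilon> * (z2 + cnj l * \<tau> + cnj u) = cnj \<epsilon> * z2 + cnj (\<epsilon> * l) * \<tau> + cnj (\<epsilon> * u)" by (simp add: algebra_simps)
  show "e (of_nat m * (normK l * \<tau> + cnj l * z1 + l * z2)) * slash_unit k \<epsilon> \<psi> \<tau> (z1 + l * \<tau> + u) (z2 + cnj l * \<tau> + cnj u)
     = slash_unit k \<epsilon> \<psi> \<tau> z1 z2"
    unfolding slash_unit_def a1 a2 using h ex by (metis mult.left_commute)
qed

lemma slash_unit_fourier:
  assumes "\<epsilon> \<in> gauss_units" "fourier_herm m c \<psi>"
  shows "fourier_herm m (\<lambda>(n, r). inverse (\<epsilon> ^ k) * c (n, cnj \<epsilon> * r)) (slash_unit k \<epsilon> \<psi>)"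
  unfolding fourier_herm_def
proof (intro ballI allI)
  fix \<tau> z1 z2 assume t: "\<tau> \<in> upper_half_plane"
  define T where "T = {(n::nat, r). r \<in> OK_sharp \<and> Re (normK r) \<le> real (n * m)}"
  define g where "g = (\<lambda>(n::nat, r). c (n, r) * e (of_nat n * \<tau> + r * (\<epsilon> * z1) + cnj r * (cnj \<epsilon> * z2)))"
  define h where "h = (\<lambda>(n::nat, r::complex). (n, cnj \<epsilon> * r))"
  have u1: "\<epsilon> * cnj \<epsilon> = 1" "normK \<epsilon> = 1" "cnj \<epsilon> * \<epsilon> = 1" "normK (cnj \<epsilon>) = 1"
    using assms(1) gauss_units_cnj gauss_units_cnj' gauss_units_normK gauss_units_cnj_mem by auto
  have cu: "cnj \<epsilon> \<in> gauss_ints" "\<epsilon> \<in> gauss_ints"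
    using assms(1) gauss_units_ints gauss_units_cnj_mem by auto
  have g: "(g has_sum \<psi> \<tau> (\<epsilon> * z1) (cnj \<epsilon> * z2)) T"
    using assms(2) t unfolding fourier_herm_def g_def T_def by blast
  have inj: "inj_on h T"
    unfolding h_def inj_on_def using u1 by (auto simp: gauss_units_ne0[OF assms(1)])
  have img: "h ` T = T"
  proof
    show "h ` T \<subseteq> T" unfolding h_def T_def using u1 cu
      by (auto simp: OK_sharp_mult normK_mult)
    show "T \<subseteq> h ` T"
    proof
      fix x assume x: "x \<in> T"
      obtain n r where nr: "x = (n, r)" by (cases x)
      have "(n, \<epsilon> * r) \<in> T" using x nr u1 cu unfolding T_def by (auto simp: OK_sharp_mult normK_mult)
      moreover have "h (n, \<epsilon> * r) = x" unfolding h_def nr using u1 by (simp add: mult.assoc[symmetric])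
      ultimately show "x \<in> h ` T" by (metis image_eqI)
    qed
  qed
  have "((g \<circ> h) has_sum \<psi> \<tau> (\<epsilon> * z1) (cnj \<epsilon> * z2)) T"
    by (metis has_sum_reindex[OF inj] img g)
  then have "((\<lambda>x. inverse (\<epsilon> ^ k) * (g \<circ> h) x) has_sum inverse (\<epsilon> ^ k) * \<psi> \<tau> (\<epsilon> * z1) (cnj \<epsilon> * z2)) T"
    by (rule has_sum_cmult_right)
  moreover have "\<And>x. inverse (\<epsilon> ^ k) * (g \<circ> h) x =
     (\<lambda>(n, r). (\<lambda>(n, r). inverse (\<epsilon> ^ k) * c (n, cnj \<epsilon> * r)) (n, r) * e (of_nat n * \<tau> + r * z1 + cnj r * z2)) x"
  proof -
    fix x :: "nat \<times> complex"
    obtain n r where nr: "x = (n, r)" by (cases x)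
    have "cnj \<epsilon> * r * (\<epsilon> * z1) = (cnj \<epsilon> * \<epsilon>) * (r * z1)" by (simp add: mult_ac)
    also have "\<dots> = r * z1" using u1 by simp
    finally have 1: "cnj \<epsilon> * r * (\<epsilon> * z1) = r * z1" .
    have "cnj (cnj \<epsilon> * r) * (cnj \<epsilon> * z2) = (\<epsilon> * cnj \<epsilon>) * (cnj r * z2)" by (simp add: mult_ac)
    also have "\<dots> = cnj r * z2" using u1 by simp
    finally have 2: "cnj (cnj \<epsilon> * r) * (cnj \<epsilon> * z2) = cnj r * z2" .
    show "inverse (\<epsilon> ^ k) * (g \<circ> h) x =
     (\<lambda>(n, r). (\<lambda>(n, r). inverse (\<epsilon> ^ k) * c (n, cnj \<epsilon> * r)) (n, r) * e (of_nat n * \<tau> + r * z1 + cnj r * z2)) x"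
      unfolding nr g_def h_def comp_def prod.case 1 2 by (simp add: mult.assoc)
  qed
  ultimately show "((\<lambda>(n, r). (\<lambda>(n, r). inverse (\<epsilon> ^ k) * c (n, cnj \<epsilon> * r)) (n, r) * e (of_nat n * \<tau> + r * z1 + cnj r * z2))
     has_sum slash_unit k \<epsilon> \<psi> \<tau> z1 z2) {(n, r). r \<in> OK_sharp \<and> Re (normK r) \<le> real (n * m)}"
    unfolding slash_unit_def T_def[symmetric] by (simp add: fun_eq_iff)
qed

lemma slash_unit_fcusp:
  assumes "\<epsilon> \<in> gauss_units" "fcusp m \<psi>"
  shows "fcusp m (slash_unit k \<epsilon> \<psi>)"
proof -
  from assms(2) obtain c where c: "fourier_herm m c \<psi>" "\<forall>n r. Re (normK r) = real (n * m) \<longrightarrow> c (n, r) = 0"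
    unfolding fcusp_def by blast
  have "normK (cnj \<epsilon>) = 1" using assms(1) gauss_units_normK gauss_units_cnj_mem by auto
  then have "\<forall>n r. Re (normK r) = real (n * m) \<longrightarrow> (\<lambda>(n, r). inverse (\<epsilon> ^ k) * c (n, cnj \<epsilon> * r)) (n, r) = 0"
    using c(2) by (auto simp: normK_mult)
  then show ?thesis unfolding fcusp_def using slash_unit_fourier[OF assms(1) c(1)] by blast
qed




lemma sum_closed:
  assumes "P (\<lambda>\<tau> z1 z2. 0)"
    and "\<And>f g. P f \<Longrightarrow> P g \<Longrightarrow> P (\<lambda>\<tau> z1 z2. f \<tau> z1 z2 + g \<tau> z1 z2)"
    and "finite E" "\<forall>\<epsilon>\<in>E. P (F \<epsilon>)"
  shows "P (\<lambda>\<tau> z1 z2. \<Sum>\<epsilon>\<in>E. F \<epsilon> \<tau> z1 z2)"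
  using assms(3,4)
proof (induction E rule: finite_induct)
  case empty then show ?case using assms(1) by simp
next
  case (insert x E)
  have "P (\<lambda>\<tau> z1 z2. F x \<tau> z1 z2 + (\<Sum>\<epsilon>\<in>E. F \<epsilon> \<tau> z1 z2))"
    using insert assms(2) by simp
  then show ?case using insert(1,2) by simp
qed

lemma holo3_zero: "holomorphic3 (\<lambda>\<tau> z1 z2. 0)"
  unfolding holomorphic3_iff
proof (intro allI impI)
  fix t z1 z2 :: complex
  have "((\<lambda>p::complex\<times>complex\<times>complex. 0::complex) has_derivative (\<lambda>h. 0 * fst h + 0 * fst (snd h) + 0 * snd (snd h))) (at (t, z1, z2))"
    by (rule hd_eq[OF has_derivative_const]) simp
  then show "\<exists>A B C. ((\<lambda>p::complex\<times>complex\<times>complex. 0::complex) has_derivative (\<lambda>h. A * fst h + B * fst (snd h) + C * snd (snd h))) (at (t, z1, z2))"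
    by blast
qed

lemma holo3_add: "holomorphic3 f \<Longrightarrow> holomorphic3 g \<Longrightarrow> holomorphic3 (\<lambda>\<tau> z1 z2. f \<tau> z1 z2 + g \<tau> z1 z2)"
  unfolding holomorphic3_iff
proof (intro allI impI)
  fix t z1 z2 :: complex assume f: "\<forall>t z1 z2. 0 < Im t \<longrightarrow> (\<exists>A B C. ((\<lambda>p. f (fst p) (fst (snd p)) (snd (snd p))) has_derivative (\<lambda>h. A * fst h + B * fst (snd h) + C * snd (snd h))) (at (t, z1, z2)))"
    and g: "\<forall>t z1 z2. 0 < Im t \<longrightarrow> (\<exists>A B C. ((\<lambda>p. g (fst p) (fst (snd p)) (snd (snd p))) has_derivative (\<lambda>h. A * fst h + B * fst (snd h) + C * snd (snd h))) (at (t, z1, z2)))"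
    and t: "0 < Im t"
  obtain A B C where 1: "((\<lambda>p. f (fst p) (fst (snd p)) (snd (snd p))) has_derivative (\<lambda>h. A * fst h + B * fst (snd h) + C * snd (snd h))) (at (t, z1, z2))"
    using f t by blast
  obtain A' B' C' where 2: "((\<lambda>p. g (fst p) (fst (snd p)) (snd (snd p))) has_derivative (\<lambda>h. A' * fst h + B' * fst (snd h) + C' * snd (snd h))) (at (t, z1, z2))"
    using g t by blast
  have "((\<lambda>p. f (fst p) (fst (snd p)) (snd (snd p)) + g (fst p) (fst (snd p)) (snd (snd p))) has_derivative (\<lambda>h. (A + A') * fst h + (B + B') * fst (snd h) + (C + C') * snd (snd h))) (at (t, z1, z2))"
    by (rule hd_eq[OF has_derivative_add[OF 1 2]]) (simp add: algebra_simps)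
  then show "\<exists>A B C. ((\<lambda>p. f (fst p) (fst (snd p)) (snd (snd p)) + g (fst p) (fst (snd p)) (snd (snd p))) has_derivative (\<lambda>h. A * fst h + B * fst (snd h) + C * snd (snd h))) (at (t, z1, z2))"
    by blast
qed

lemma modinv_zero: "modinv k m (\<lambda>\<tau> z1 z2. 0)"
  by (simp add: modinv_def slash_herm_def)

lemma modinv_add: "modinv k m f \<Longrightarrow> modinv k m g \<Longrightarrow> modinv k m (\<lambda>\<tau> z1 z2. f \<tau> z1 z2 + g \<tau> z1 z2)"
  unfolding modinv_def slash_herm_def by (simp add: distrib_left)

lemma transinv_zero: "transinv m (\<lambda>\<tau> z1 z2. 0)"
  by (simp add: transinv_def)

lemma transinv_add: "transinv m f \<Longrightarrow> transinv m g \<Longrightarrow> transinv m (\<lambda>\<tau> z1 z2. f \<tau> z1 z2 + g \<tau> z1 z2)"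
  unfolding transinv_def by (simp add: distrib_left)

lemma fourier_zero: "fourier_herm m (\<lambda>_. 0) (\<lambda>\<tau> z1 z2. 0)"
  unfolding fourier_herm_def by (simp add: case_prod_unfold)

lemma fourier_add: "fourier_herm m c f \<Longrightarrow> fourier_herm m c' g \<Longrightarrow>
   fourier_herm m (\<lambda>x. c x + c' x) (\<lambda>\<tau> z1 z2. f \<tau> z1 z2 + g \<tau> z1 z2)"
  unfolding fourier_herm_def
  by (auto simp: case_prod_unfold distrib_right intro!: has_sum_add)

lemma exfourier_zero: "\<exists>c. fourier_herm m c (\<lambda>\<tau> z1 z2. 0)"
  using fourier_zero by blast

lemma exfourier_add: "\<exists>c. fourier_herm m c f \<Longrightarrow> \<exists>c. fourier_herm m c g \<Longrightarrow> \<exists>c. fourier_herm m c (\<lambda>\<tau> z1 z2. f \<tau> z1 z2 + g \<tau> z1 z2)"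
  using fourier_add by blast

lemma fcusp_zero: "fcusp m (\<lambda>\<tau> z1 z2. 0)"
  unfolding fcusp_def using fourier_zero by blast

lemma fcusp_add: "fcusp m f \<Longrightarrow> fcusp m g \<Longrightarrow> fcusp m (\<lambda>\<tau> z1 z2. f \<tau> z1 z2 + g \<tau> z1 z2)"
  unfolding fcusp_def
proof -
  assume "\<exists>c. fourier_herm m c f \<and> (\<forall>n r. Re (normK r) = real (n * m) \<longrightarrow> c (n, r) = 0)"
     "\<exists>c. fourier_herm m c g \<and> (\<forall>n r. Re (normK r) = real (n * m) \<longrightarrow> c (n, r) = 0)"
  then obtain c c' where "fourier_herm m c f" "\<forall>n r. Re (normK r) = real (n * m) \<longrightarrow> c (n, r) = 0"
     "fourier_herm m c' g" "\<forall>n r. Re (normK r) = real (n * m) \<longrightarrow> c' (n, r) = 0" by blast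
  then show "\<exists>c. fourier_herm m c (\<lambda>\<tau> z1 z2. f \<tau> z1 z2 + g \<tau> z1 z2) \<and> (\<forall>n r. Re (normK r) = real (n * m) \<longrightarrow> c (n, r) = 0)"
    using fourier_add[of m c f c' g] by auto
qed

lemma H_lift_eq: "H_lift k \<phi>1 \<phi>2 = (\<lambda>\<tau> z1 z2. \<Sum>\<epsilon>\<in>gauss_units. slash_unit k \<epsilon> (\<lambda>t w1 w2. \<phi>1 t ((w1 + w2) / 2) * \<phi>2 t (\<i> / 2 * (w1 - w2))) \<tau> z1 z2)"
  by (simp add: fun_eq_iff H_lift_def)

lemma finite_gauss_units: "finite gauss_units"
  by (simp add: gauss_units_def)




definition psi :: "(complex \<Rightarrow> complex \<Rightarrow> complex) \<Rightarrow> (complex \<Rightarrow> complex \<Rightarrow> complex) \<Rightarrow> complex \<Rightarrow> complex \<Rightarrow> complex \<Rightarrow> complex" where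
  "psi \<phi>1 \<phi>2 = (\<lambda>t w1 w2. \<phi>1 t ((w1 + w2) / 2) * \<phi>2 t (\<i> / 2 * (w1 - w2)))"

lemma comp2:
  assumes "((\<lambda>p. f (fst p) (snd p)) has_derivative (\<lambda>h. A * fst h + B * snd h)) (at (g1 x, g2 x))"
    "(g1 has_derivative g1') (at x)" "(g2 has_derivative g2') (at x)"
  shows "((\<lambda>y. f (g1 y) (g2 y)) has_derivative (\<lambda>h. A * g1' h + B * g2' h)) (at x)"
  using has_derivative_compose[OF has_derivative_Pair[OF assms(2,3)] assms(1)] by simp

lemma psi_holo:
  assumes "holomorphic2 \<phi>1" "holomorphic2 \<phi>2"
  shows "holomorphic3 (psi \<phi>1 \<phi>2)"
  unfolding holomorphic3_iff
proof (intro allI impI)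
  fix t z1 z2 :: complex assume t: "0 < Im t"
  let ?x = "(t, z1, z2)"
  obtain A1 B1 where 1: "((\<lambda>p. \<phi>1 (fst p) (snd p)) has_derivative (\<lambda>h. A1 * fst h + B1 * snd h)) (at (t, (z1 + z2) / 2))"
    using assms(1) t unfolding holomorphic2_iff by blast
  obtain A2 B2 where 2: "((\<lambda>p. \<phi>2 (fst p) (snd p)) has_derivative (\<lambda>h. A2 * fst h + B2 * snd h)) (at (t, \<i> / 2 * (z1 - z2)))"
    using assms(2) t unfolding holomorphic2_iff by blast
  have g1: "(fst has_derivative fst) (at ?x)" by (rule has_derivative_fst[OF has_derivative_ident])
  have g2: "((\<lambda>p::complex\<times>complex\<times>complex. (fst (snd p) + snd (snd p)) / 2) has_derivative (\<lambda>h. (fst (snd h) + snd (snd h)) / 2)) (at ?x)"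
    by (auto intro!: derivative_eq_intros)
  have g3: "((\<lambda>p::complex\<times>complex\<times>complex. \<i> / 2 * (fst (snd p) - snd (snd p))) has_derivative (\<lambda>h. \<i> / 2 * (fst (snd h) - snd (snd h)))) (at ?x)"
    by (auto intro!: derivative_eq_intros)
  have d1: "((\<lambda>p. \<phi>1 (fst p) ((fst (snd p) + snd (snd p)) / 2)) has_derivative (\<lambda>h. A1 * fst h + B1 * ((fst (snd h) + snd (snd h)) / 2))) (at ?x)"
    by (rule comp2[OF _ g1 g2]) (use 1 in simp)
  have d2: "((\<lambda>p. \<phi>2 (fst p) (\<i> / 2 * (fst (snd p) - snd (snd p)))) has_derivative (\<lambda>h. A2 * fst h + B2 * (\<i> / 2 * (fst (snd h) - snd (snd h))))) (at ?x)"
    by (rule comp2[OF _ g1 g3]) (use 2 in simp)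
  let ?a = "\<phi>1 t ((z1 + z2) / 2)" and ?b = "\<phi>2 t (\<i> / 2 * (z1 - z2))"
  have "((\<lambda>p. psi \<phi>1 \<phi>2 (fst p) (fst (snd p)) (snd (snd p))) has_derivative
    (\<lambda>h. (?a * A2 + A1 * ?b) * fst h + (?a * B2 * \<i> / 2 + B1 / 2 * ?b) * fst (snd h) + (- ?a * B2 * \<i> / 2 + B1 / 2 * ?b) * snd (snd h))) (at ?x)"
    unfolding psi_def
    by (rule hd_eq[OF has_derivative_mult[OF d1 d2]]) (simp add: field_simps)
  then show "\<exists>A B C. ((\<lambda>p. psi \<phi>1 \<phi>2 (fst p) (fst (snd p)) (snd (snd p))) has_derivative (\<lambda>h. A * fst h + B * fst (snd h) + C * snd (snd h))) (at ?x)"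
    by blast
qed




lemma jf_mod: "jacobi_form k m \<phi> \<Longrightarrow> a * d - b * c = 1 \<Longrightarrow> \<tau> \<in> upper_half_plane \<Longrightarrow>
   slash_classical k m a b c d \<phi> \<tau> z = \<phi> \<tau> z"
  unfolding jacobi_form_def by blast

lemma jf_trans: "jacobi_form k m \<phi> \<Longrightarrow> \<tau> \<in> upper_half_plane \<Longrightarrow>
   e (of_nat m * (of_int (l ^ 2) * \<tau> + 2 * of_int l * z)) * \<phi> \<tau> (z + of_int l * \<tau> + of_int u) = \<phi> \<tau> z"
  unfolding jacobi_form_def by blast

lemma psi_modinv:
  assumes "jacobi_form k1 m \<phi>1" "jacobi_form k2 m \<phi>2"
  shows "modinv (k1 + k2) m (psi \<phi>1 \<phi>2)"
  unfolding modinv_def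
proof (intro allI impI ballI)
  fix a b c d :: int and \<tau> z1 z2 :: complex assume abcd: "a * d - b * c = 1" and t: "\<tau> \<in> upper_half_plane"
  define D where "D = of_int c * \<tau> + of_int d"
  define M where "M = (of_int a * \<tau> + of_int b) / D"
  define A where "A = (z1 + z2) / 2"
  define B where "B = \<i> / 2 * (z1 - z2)"
  have h1: "inverse (D ^ k1) * e (- of_nat m * of_int c * A ^ 2 / D) * \<phi>1 M (A / D) = \<phi>1 \<tau> A"
    using jf_mod[OF assms(1) abcd t, of A] unfolding slash_classical_def D_def M_def .
  have h2: "inverse (D ^ k2) * e (- of_nat m * of_int c * B ^ 2 / D) * \<phi>2 M (B / D) = \<phi>2 \<tau> B"
    using jf_mod[OF assms(2) abcd t, of B] unfolding slash_classical_def D_def M_def .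
  have q1: "(z1 / D + z2 / D) / 2 = A / D" unfolding A_def by (simp add: add_divide_distrib mult.commute)
  have q2: "\<i> / 2 * (z1 / D - z2 / D) = B / D" unfolding B_def by (simp add: diff_divide_distrib right_diff_distrib)
  have ex: "- of_nat m * of_int c * z1 * z2 / D = - of_nat m * of_int c * A ^ 2 / D + - of_nat m * of_int c * B ^ 2 / D"
  proof -
    have "- of_nat m * of_int c * z1 * z2 = - of_nat m * of_int c * A ^ 2 + - of_nat m * of_int c * B ^ 2"
      unfolding A_def B_def by (simp add: power2_eq_square field_simps)
    then show ?thesis by (metis add_divide_distrib)
  qed
  have ee: "e (- of_nat m * of_int c * z1 * z2 / D) = e (- of_nat m * of_int c * A ^ 2 / D) * e (- of_nat m * of_int c * B ^ 2 / D)"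
    unfolding ex e_add ..
  have ii: "inverse (D ^ (k1 + k2)) = inverse (D ^ k1) * inverse (D ^ k2)"
    by (simp add: power_add)
  have "slash_herm (k1 + k2) m a b c d (psi \<phi>1 \<phi>2) \<tau> z1 z2 =
     inverse (D ^ (k1 + k2)) * e (- of_nat m * of_int c * z1 * z2 / D) * (\<phi>1 M (A / D) * \<phi>2 M (B / D))"
    unfolding slash_herm_def psi_def D_def[symmetric] M_def[symmetric] q1 q2 ..
  also have "\<dots> = (inverse (D ^ k1) * e (- of_nat m * of_int c * A ^ 2 / D) * \<phi>1 M (A / D)) *
      (inverse (D ^ k2) * e (- of_nat m * of_int c * B ^ 2 / D) * \<phi>2 M (B / D))"
    unfolding ee ii by (simp only: mult_ac)
  also have "\<dots> = psi \<phi>1 \<phi>2 \<tau> z1 z2" unfolding h1 h2 by (simp add: psi_def A_def B_def)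
  finally show "slash_herm (k1 + k2) m a b c d (psi \<phi>1 \<phi>2) \<tau> z1 z2 = psi \<phi>1 \<phi>2 \<tau> z1 z2" .
qed




lemma psi_transinv:
  assumes "jacobi_form k1 m \<phi>1" "jacobi_form k2 m \<phi>2"
  shows "transinv m (psi \<phi>1 \<phi>2)"
  unfolding transinv_def
proof (intro allI impI ballI)
  fix l u \<tau> z1 z2 :: complex assume l: "l \<in> gauss_ints" and u: "u \<in> gauss_ints" and t: "\<tau> \<in> upper_half_plane"
  obtain p q :: int where lpq: "l = of_int p + \<i> * of_int q" using l gauss_intsE by blast
  obtain s v :: int where usv: "u = of_int s + \<i> * of_int v" using u gauss_intsE by blast
  define A where "A = (z1 + z2) / 2"
  define B where "B = \<i> / 2 * (z1 - z2)"
  have h1: "e (of_nat m * (of_int (p ^ 2) * \<tau> + 2 * of_int p * A)) * \<phi>1 \<tau> (A + of_int p * \<tau> + of_int s) = \<phi>1 \<tau> A"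
    by (rule jf_trans[OF assms(1) t])
  have h2: "e (of_nat m * (of_int ((- q) ^ 2) * \<tau> + 2 * of_int (- q) * B)) * \<phi>2 \<tau> (B + of_int (- q) * \<tau> + of_int (- v)) = \<phi>2 \<tau> B"
    by (rule jf_trans[OF assms(2) t])
  have a1: "(z1 + l * \<tau> + u + (z2 + cnj l * \<tau> + cnj u)) / 2 = A + of_int p * \<tau> + of_int s"
  proof -
    have 1: "l + cnj l = 2 * of_int p" "u + cnj u = 2 * of_int s" unfolding lpq usv by (simp_all add: complex_eq_iff)
    have "z1 + l * \<tau> + u + (z2 + cnj l * \<tau> + cnj u) = (z1 + z2) + (l + cnj l) * \<tau> + (u + cnj u)"
      by (simp add: algebra_simps)
    also have "\<dots> = 2 * ((z1 + z2) / 2 + of_int p * \<tau> + of_int s)" unfolding 1 by (simp add: algebra_simps)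
    finally show ?thesis unfolding A_def by simp
  qed
  have a2: "\<i> / 2 * (z1 + l * \<tau> + u - (z2 + cnj l * \<tau> + cnj u)) = B + of_int (- q) * \<tau> + of_int (- v)"
  proof -
    have 1: "\<i> * (l - cnj l) = 2 * of_int (- q)" "\<i> * (u - cnj u) = 2 * of_int (- v)" unfolding lpq usv by (simp_all add: complex_eq_iff)
    have "\<i> / 2 * (z1 + l * \<tau> + u - (z2 + cnj l * \<tau> + cnj u)) = \<i> / 2 * (z1 - z2) + (\<i> * (l - cnj l)) / 2 * \<tau> + (\<i> * (u - cnj u)) / 2"
      by (simp add: algebra_simps add_divide_distrib diff_divide_distrib)
    also have "\<dots> = B + of_int (- q) * \<tau> + of_int (- v)" unfolding 1 B_def by simp
    finally show ?thesis .
  qed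
  have ex: "of_nat m * (normK l * \<tau> + cnj l * z1 + l * z2) =
     of_nat m * (of_int (p ^ 2) * \<tau> + 2 * of_int p * A) + of_nat m * (of_int ((- q) ^ 2) * \<tau> + 2 * of_int (- q) * B)"
  proof -
    have n: "normK l = of_int (p ^ 2) + of_int ((- q) ^ 2)" unfolding lpq normK_def by (simp add: complex_eq_iff power2_eq_square)
    have c: "cnj l = of_int p - \<i> * of_int q" unfolding lpq by (simp add: complex_eq_iff)
    have "normK l * \<tau> + cnj l * z1 + l * z2 = (of_int (p ^ 2) * \<tau> + 2 * of_int p * A) + (of_int ((- q) ^ 2) * \<tau> + 2 * of_int (- q) * B)"
    proof -
      have lz: "l * z2 = of_int p * z2 + \<i> * of_int q * z2" unfolding lpq by (simp add: algebra_simps)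
      show ?thesis unfolding n c lz A_def B_def by (simp add: field_simps)
    qed
    then show ?thesis by (simp add: distrib_left)
  qed
  show "e (of_nat m * (normK l * \<tau> + cnj l * z1 + l * z2)) * psi \<phi>1 \<phi>2 \<tau> (z1 + l * \<tau> + u) (z2 + cnj l * \<tau> + cnj u) =
       psi \<phi>1 \<phi>2 \<tau> z1 z2"
  proof -
    have L: "psi \<phi>1 \<phi>2 \<tau> (z1 + l * \<tau> + u) (z2 + cnj l * \<tau> + cnj u) =
        \<phi>1 \<tau> (A + of_int p * \<tau> + of_int s) * \<phi>2 \<tau> (B + of_int (- q) * \<tau> + of_int (- v))"
      by (simp only: psi_def a1 a2)
    have R: "psi \<phi>1 \<phi>2 \<tau> z1 z2 = \<phi>1 \<tau> A * \<phi>2 \<tau> B" by (simp add: psi_def A_def B_def)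
    show ?thesis unfolding L R ex e_add[symmetric]
      by (subst h1[symmetric], subst h2[symmetric]) (simp only: mult_ac)
  qed
qed




lemma prod_has_sum:
  fixes f :: "'a \<Rightarrow> complex" and g :: "'b \<Rightarrow> complex"
  assumes f: "(f has_sum a) A" and g: "(g has_sum b) B"
  shows "((\<lambda>(x, y). f x * g y) has_sum a * b) (A \<times> B)"
proof -
  have fa: "(\<lambda>x. norm (f x)) summable_on A"
    using f has_sum_imp_summable summable_on_iff_abs_summable_on_complex by blast
  have ga: "(\<lambda>x. norm (g x)) summable_on B"
    using g has_sum_imp_summable summable_on_iff_abs_summable_on_complex by blast
  have "(\<lambda>p. norm ((\<lambda>(x, y). f x * g y) p)) summable_on Sigma A (\<lambda>_. B)"
  proof (rule Infinite_Sum.abs_summable_on_Sigma_iff[THEN iffD2], intro conjI ballI)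
    fix x assume "x \<in> A"
    show "(\<lambda>y. norm ((\<lambda>(x, y). f x * g y) (x, y))) summable_on B"
      using summable_on_cmult_right[OF ga, of "norm (f x)"] by (simp add: norm_mult)
  next
    have "(\<lambda>x. norm (f x) * infsum (\<lambda>y. norm (g y)) B) summable_on A"
      by (rule summable_on_cmult_left[OF fa])
    moreover have "\<And>x. norm (infsum (\<lambda>y. norm ((\<lambda>(x, y). f x * g y) (x, y))) B) = norm (f x) * infsum (\<lambda>y. norm (g y)) B"
      by (simp add: norm_mult infsum_cmult_right' infsum_nonneg)
    ultimately show "(\<lambda>x. norm (infsum (\<lambda>y. norm ((\<lambda>(x, y). f x * g y) (x, y))) B)) summable_on A"
      by simp
  qed
  then have s: "(\<lambda>(x, y). f x * g y) summable_on Sigma A (\<lambda>_. B)"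
    by (rule abs_summable_summable)
  have "((\<lambda>(x, y). f x * g y) has_sum a * b) (Sigma A (\<lambda>_. B))"
  proof (rule has_sum_SigmaI[OF _ _ s])
    fix x assume "x \<in> A"
    show "((\<lambda>y. (\<lambda>(x, y). f x * g y) (x, y)) has_sum f x * b) B"
      using has_sum_cmult_right[OF g] by simp
  next
    show "((\<lambda>x. f x * b) has_sum a * b) A" by (rule has_sum_cmult_left[OF f])
  qed
  then show ?thesis by simp
qed




definition Sset :: "nat \<Rightarrow> (nat \<times> int) set" where
  "Sset m = {(n, r). r ^ 2 \<le> 4 * int n * int m}"

definition Gmap :: "(nat \<times> int) \<times> (nat \<times> int) \<Rightarrow> nat \<times> complex" where
  "Gmap p = (fst (fst p) + fst (snd p), (of_int (snd (fst p)) + \<i> * of_int (snd (snd p))) / 2)"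

definition fib :: "nat \<Rightarrow> nat \<times> complex \<Rightarrow> ((nat \<times> int) \<times> (nat \<times> int)) set" where
  "fib m q = {p \<in> Sset m \<times> Sset m. Gmap p = q}"

definition Cco :: "(nat \<times> int \<Rightarrow> complex) \<Rightarrow> (nat \<times> int \<Rightarrow> complex) \<Rightarrow> nat \<Rightarrow> nat \<times> complex \<Rightarrow> complex" where
  "Cco c1 c2 m q = (\<Sum>p\<in>fib m q. c1 (fst p) * c2 (snd p))"

definition Tset :: "nat \<Rightarrow> (nat \<times> complex) set" where
  "Tset m = {(n, r). r \<in> OK_sharp \<and> Re (normK r) \<le> real (n * m)}"

lemma Gmap_cplx: "(of_int r1 + \<i> * of_int r2) / 2 = Complex (of_int r1 / 2) (of_int r2 / 2)"
  by (simp add: complex_eq_iff)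

lemma fib_finite: "finite (fib m q)"
proof -
  obtain n r where q: "q = (n, r)" by (cases q)
  have "fib m q \<subseteq> (\<lambda>j. ((j, \<lfloor>2 * Re r\<rfloor>), (n - j, \<lfloor>2 * Im r\<rfloor>))) ` {..n}"
  proof
    fix p assume p: "p \<in> fib m q"
    obtain n1 r1 n2 r2 where pp: "p = ((n1, r1), (n2, r2))" by (metis prod.collapse)
    have g: "n1 + n2 = n" "Complex (of_int r1 / 2) (of_int r2 / 2) = r"
      using p unfolding fib_def Gmap_def pp q by (auto simp: Gmap_cplx)
    have "\<lfloor>2 * Re r\<rfloor> = r1" "\<lfloor>2 * Im r\<rfloor> = r2" using g(2) by auto
    then have "p = (\<lambda>j. ((j, \<lfloor>2 * Re r\<rfloor>), (n - j, \<lfloor>2 * Im r\<rfloor>))) n1" using g(1) pp by auto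
    moreover have "n1 \<in> {..n}" using g(1) by auto
    ultimately show "p \<in> (\<lambda>j. ((j, \<lfloor>2 * Re r\<rfloor>), (n - j, \<lfloor>2 * Im r\<rfloor>))) ` {..n}" by blast
  qed
  then show ?thesis by (rule finite_subset) simp
qed

lemma Gmap_T:
  assumes "p \<in> Sset m \<times> Sset m"
  shows "Gmap p \<in> Tset m"
proof -
  obtain n1 r1 n2 r2 where pp: "p = ((n1, r1), (n2, r2))" by (metis prod.collapse)
  have s: "r1 ^ 2 \<le> 4 * int n1 * int m" "r2 ^ 2 \<le> 4 * int n2 * int m"
    using assms pp by (auto simp: Sset_def)
  have s': "real_of_int r1 ^ 2 \<le> 4 * real n1 * real m" "real_of_int r2 ^ 2 \<le> 4 * real n2 * real m"
  proof -
    have "real_of_int (r1 ^ 2) \<le> real_of_int (4 * int n1 * int m)" "real_of_int (r2 ^ 2) \<le> real_of_int (4 * int n2 * int m)"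
      using s by (simp_all only: of_int_le_iff)
    then show "real_of_int r1 ^ 2 \<le> 4 * real n1 * real m" "real_of_int r2 ^ 2 \<le> 4 * real n2 * real m" by simp_all
  qed
  have ok: "(of_int r1 + \<i> * of_int r2) / 2 \<in> OK_sharp"
  proof -
    have "(of_int r1 + \<i> * of_int r2) / 2 = (\<lambda>x. (\<i> / 2) * x) (of_int r2 - \<i> * of_int r1)"
      by (simp add: complex_eq_iff)
    moreover have "of_int r2 - \<i> * of_int r1 \<in> gauss_ints" by (simp add: gauss_ints_def)
    ultimately show ?thesis unfolding OK_sharp_def by (rule image_eqI)
  qed
  have "Re (normK ((of_int r1 + \<i> * of_int r2) / 2)) = (real_of_int r1 / 2) ^ 2 + (real_of_int r2 / 2) ^ 2"
    unfolding Gmap_cplx Re_normK by simp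
  also have "\<dots> = (real_of_int r1 ^ 2 + real_of_int r2 ^ 2) / 4" by (simp add: power_divide)
  also have "\<dots> \<le> real ((n1 + n2) * m)" using s' by (simp add: algebra_simps)
  finally show ?thesis using ok unfolding Gmap_def Tset_def pp by simp
qed

lemma fourier_psi:
  assumes f1: "fourier_classical m c1 \<phi>1" and f2: "fourier_classical m c2 \<phi>2"
  shows "fourier_herm m (Cco c1 c2 m) (psi \<phi>1 \<phi>2)"
  unfolding fourier_herm_def Tset_def[symmetric]
proof (intro ballI allI)
  fix \<tau> z1 z2 :: complex assume t: "\<tau> \<in> upper_half_plane"
  define a where "a = (z1 + z2) / 2"
  define b where "b = \<i> / 2 * (z1 - z2)"
  define F1 where "F1 = (\<lambda>(n, r). c1 (n, r) * e (of_nat n * \<tau> + of_int r * a))"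
  define F2 where "F2 = (\<lambda>(n, r). c2 (n, r) * e (of_nat n * \<tau> + of_int r * b))"
  define E where "E = (\<lambda>(n::nat, r::complex). e (of_nat n * \<tau> + r * z1 + cnj r * z2))"
  have s1: "(F1 has_sum \<phi>1 \<tau> a) (Sset m)"
    using f1 t unfolding fourier_classical_def F1_def Sset_def by blast
  have s2: "(F2 has_sum \<phi>2 \<tau> b) (Sset m)"
    using f2 t unfolding fourier_classical_def F2_def Sset_def by blast
  have P: "((\<lambda>(x, y). F1 x * F2 y) has_sum \<phi>1 \<tau> a * \<phi>2 \<tau> b) (Sset m \<times> Sset m)"
    by (rule prod_has_sum[OF s1 s2])
  have key: "F1 (fst p) * F2 (snd p) = c1 (fst p) * c2 (snd p) * E (Gmap p)" for p
  proof -
    obtain n1 r1 n2 r2 where pp: "p = ((n1, r1), (n2, r2))" by (metis prod.collapse)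
    have ex: "of_nat n1 * \<tau> + of_int r1 * a + (of_nat n2 * \<tau> + of_int r2 * b) =
          of_nat (n1 + n2) * \<tau> + (of_int r1 + \<i> * of_int r2) / 2 * z1 + cnj ((of_int r1 + \<i> * of_int r2) / 2) * z2"
      unfolding a_def b_def by (simp add: field_simps)
    have ee: "e (of_nat n1 * \<tau> + of_int r1 * a) * e (of_nat n2 * \<tau> + of_int r2 * b) =
       e (of_nat (n1 + n2) * \<tau> + (of_int r1 + \<i> * of_int r2) / 2 * z1 + cnj ((of_int r1 + \<i> * of_int r2) / 2) * z2)"
      unfolding e_add ex ..
    have "F1 (fst p) * F2 (snd p) = c1 (n1, r1) * c2 (n2, r2) * (e (of_nat n1 * \<tau> + of_int r1 * a) * e (of_nat n2 * \<tau> + of_int r2 * b))"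
      unfolding pp F1_def F2_def by (simp only: prod.case fst_conv snd_conv mult_ac)
    also have "\<dots> = c1 (fst p) * c2 (snd p) * E (Gmap p)"
      unfolding ee pp E_def Gmap_def by simp
    finally show ?thesis .
  qed
  define h where "h = (\<lambda>p. (Gmap p, p))"
  define \<Phi> where "\<Phi> = (\<lambda>(q::nat \<times> complex, p::(nat \<times> int) \<times> (nat \<times> int)). F1 (fst p) * F2 (snd p))"
  have inj: "inj_on h (Sset m \<times> Sset m)" unfolding h_def inj_on_def by simp
  have img: "h ` (Sset m \<times> Sset m) = Sigma (Tset m) (fib m)"
  proof
    show "h ` (Sset m \<times> Sset m) \<subseteq> Sigma (Tset m) (fib m)"
      unfolding h_def fib_def using Gmap_T by auto
    show "Sigma (Tset m) (fib m) \<subseteq> h ` (Sset m \<times> Sset m)"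
    proof
      fix x assume "x \<in> Sigma (Tset m) (fib m)"
      then obtain q p where x: "x = (q, p)" "p \<in> fib m q" by auto
      then have "x = h p" "p \<in> Sset m \<times> Sset m" unfolding h_def fib_def by auto
      then show "x \<in> h ` (Sset m \<times> Sset m)" by blast
    qed
  qed
  have "\<Phi> \<circ> h = (\<lambda>(x, y). F1 x * F2 y)" unfolding \<Phi>_def h_def by (auto simp: fun_eq_iff)
  then have "(\<Phi> has_sum \<phi>1 \<tau> a * \<phi>2 \<tau> b) (Sigma (Tset m) (fib m))"
    using P by (metis has_sum_reindex[OF inj] img)
  then have "((\<lambda>q. Cco c1 c2 m q * E q) has_sum \<phi>1 \<tau> a * \<phi>2 \<tau> b) (Tset m)"
  proof (rule has_sum_SigmaD)
    fix q assume q: "q \<in> Tset m"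
    have "(\<Sum>p\<in>fib m q. \<Phi> (q, p)) = (\<Sum>p\<in>fib m q. c1 (fst p) * c2 (snd p) * E q)"
    proof (rule sum.cong)
      fix p assume "p \<in> fib m q"
      then have "Gmap p = q" unfolding fib_def by auto
      then show "\<Phi> (q, p) = c1 (fst p) * c2 (snd p) * E q" unfolding \<Phi>_def using key[of p] by simp
    qed simp
    also have "\<dots> = Cco c1 c2 m q * E q" unfolding Cco_def by (simp add: sum_distrib_right)
    finally show "((\<lambda>p. \<Phi> (q, p)) has_sum Cco c1 c2 m q * E q) (fib m q)"
      by (intro has_sum_finiteI fib_finite) simp
  qed
  moreover have "psi \<phi>1 \<phi>2 \<tau> z1 z2 = \<phi>1 \<tau> a * \<phi>2 \<tau> b" unfolding psi_def a_def b_def ..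
  moreover have "(\<lambda>q. Cco c1 c2 m q * E q) = (\<lambda>(n, r). Cco c1 c2 m (n, r) * e (of_nat n * \<tau> + r * z1 + cnj r * z2))"
    unfolding E_def by (auto simp: fun_eq_iff)
  ultimately show "((\<lambda>(n, r). Cco c1 c2 m (n, r) * e (of_nat n * \<tau> + r * z1 + cnj r * z2)) has_sum psi \<phi>1 \<phi>2 \<tau> z1 z2) (Tset m)"
    by simp
qed

lemma Cco_cusp:
  assumes c1: "\<forall>n r. 4 * int n * int m = r ^ 2 \<longrightarrow> c1 (n, r) = 0"
    and q: "Re (normK r) = real (n * m)"
  shows "Cco c1 c2 m (n, r) = 0"
  unfolding Cco_def
proof (rule sum.neutral, rule ballI)
  fix p assume p: "p \<in> fib m (n, r)"
  obtain n1 r1 n2 r2 where pp: "p = ((n1, r1), (n2, r2))" by (metis prod.collapse)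
  have s: "r1 ^ 2 \<le> 4 * int n1 * int m" "r2 ^ 2 \<le> 4 * int n2 * int m"
    using p pp by (auto simp: Sset_def fib_def)
  have s': "real_of_int r1 ^ 2 \<le> 4 * real n1 * real m" "real_of_int r2 ^ 2 \<le> 4 * real n2 * real m"
  proof -
    have "real_of_int (r1 ^ 2) \<le> real_of_int (4 * int n1 * int m)" "real_of_int (r2 ^ 2) \<le> real_of_int (4 * int n2 * int m)"
      using s by (simp_all only: of_int_le_iff)
    then show "real_of_int r1 ^ 2 \<le> 4 * real n1 * real m" "real_of_int r2 ^ 2 \<le> 4 * real n2 * real m" by simp_all
  qed
  have g: "n1 + n2 = n" "(of_int r1 + \<i> * of_int r2) / 2 = r"
    using p pp unfolding fib_def Gmap_def by auto
  have "Re (normK r) = (real_of_int r1 / 2) ^ 2 + (real_of_int r2 / 2) ^ 2"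
    unfolding g(2)[symmetric] Gmap_cplx Re_normK by simp
  also have "\<dots> = (real_of_int r1 ^ 2 + real_of_int r2 ^ 2) / 4" by (simp add: power_divide)
  finally have "(real_of_int r1 ^ 2 + real_of_int r2 ^ 2) / 4 = real ((n1 + n2) * m)" using q g(1) by simp
  then have "real_of_int r1 ^ 2 = 4 * real n1 * real m" using s' by (simp add: algebra_simps)
  then have "4 * int n1 * int m = r1 ^ 2"
  proof -
    assume h: "real_of_int r1 ^ 2 = 4 * real n1 * real m"
    have "real_of_int (4 * int n1 * int m) = real_of_int (r1 ^ 2)" using h by simp
    then show ?thesis by (simp only: of_int_eq_iff)
  qed
  then have "c1 (n1, r1) = 0" using c1 by blast
  then show "c1 (fst p) * c2 (snd p) = 0" using pp by simp
qed




theorem proposition4p5: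
  fixes k1 k2 m :: nat and \<phi>1 \<phi>2 :: "complex \<Rightarrow> complex \<Rightarrow> complex"
  assumes "k1 > 0" "k2 > 0" "m > 0"
    and "jacobi_form k1 m \<phi>1" "jacobi_form k2 m \<phi>2"
  shows "herm_jacobi_form (k1 + k2) m (H_lift (k1 + k2) \<phi>1 \<phi>2)
         \<and> (jacobi_cusp_form k1 m \<phi>1 \<and> jacobi_cusp_form k2 m \<phi>2 \<longrightarrow>
              herm_jacobi_cusp_form (k1 + k2) m (H_lift (k1 + k2) \<phi>1 \<phi>2))"
proof -
  let ?k = "k1 + k2"
  let ?\<psi> = "psi \<phi>1 \<phi>2"
  have Heq: "H_lift ?k \<phi>1 \<phi>2 = (\<lambda>\<tau> z1 z2. \<Sum>\<epsilon>\<in>gauss_units. slash_unit ?k \<epsilon> ?\<psi> \<tau> z1 z2)"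
    unfolding H_lift_eq psi_def ..
  have j1: "holomorphic2 \<phi>1" "\<exists>c. fourier_classical m c \<phi>1" using assms(4) unfolding jacobi_form_def by blast+
  have j2: "holomorphic2 \<phi>2" "\<exists>c. fourier_classical m c \<phi>2" using assms(5) unfolding jacobi_form_def by blast+
  have hol: "holomorphic3 (H_lift ?k \<phi>1 \<phi>2)"
    unfolding Heq
  proof (rule sum_closed[of holomorphic3])
    show "holomorphic3 (\<lambda>\<tau> z1 z2. 0)" by (rule holo3_zero)
    show "\<And>f g. holomorphic3 f \<Longrightarrow> holomorphic3 g \<Longrightarrow> holomorphic3 (\<lambda>\<tau> z1 z2. f \<tau> z1 z2 + g \<tau> z1 z2)"
      by (rule holo3_add)
    show "finite gauss_units" by (rule finite_gauss_units)
    show "\<forall>\<epsilon>\<in>gauss_units. holomorphic3 (slash_unit ?k \<epsilon> ?\<psi>)"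
      using slash_unit_holo[OF _ psi_holo[OF j1(1) j2(1)]] by blast
  qed
  have mi: "modinv ?k m (H_lift ?k \<phi>1 \<phi>2)"
    unfolding Heq
  proof (rule sum_closed[of "modinv ?k m"])
    show "(modinv ?k m) (\<lambda>\<tau> z1 z2. 0)" by (rule modinv_zero)
    show "\<And>f g. (modinv ?k m) f \<Longrightarrow> (modinv ?k m) g \<Longrightarrow> (modinv ?k m) (\<lambda>\<tau> z1 z2. f \<tau> z1 z2 + g \<tau> z1 z2)"
      by (rule modinv_add)
    show "finite gauss_units" by (rule finite_gauss_units)
    show "\<forall>\<epsilon>\<in>gauss_units. (modinv ?k m) (slash_unit ?k \<epsilon> ?\<psi>)"
      using slash_unit_modinv[OF _ psi_modinv[OF assms(4,5)]] by blast
  qed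
  have ti: "transinv m (H_lift ?k \<phi>1 \<phi>2)"
    unfolding Heq
  proof (rule sum_closed[of "transinv m"])
    show "(transinv m) (\<lambda>\<tau> z1 z2. 0)" by (rule transinv_zero)
    show "\<And>f g. (transinv m) f \<Longrightarrow> (transinv m) g \<Longrightarrow> (transinv m) (\<lambda>\<tau> z1 z2. f \<tau> z1 z2 + g \<tau> z1 z2)"
      by (rule transinv_add)
    show "finite gauss_units" by (rule finite_gauss_units)
    show "\<forall>\<epsilon>\<in>gauss_units. (transinv m) (slash_unit ?k \<epsilon> ?\<psi>)"
      using slash_unit_transinv[OF _ psi_transinv[OF assms(4,5)]] by blast
  qed
  obtain c1 c2 where c: "fourier_classical m c1 \<phi>1" "fourier_classical m c2 \<phi>2" using j1 j2 by blast
  have fo: "\<exists>c. fourier_herm m c (H_lift ?k \<phi>1 \<phi>2)"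
    unfolding Heq
  proof (rule sum_closed[of "\<lambda>f. \<exists>c. fourier_herm m c f"])
    show "(\<lambda>f. \<exists>c. fourier_herm m c f) (\<lambda>\<tau> z1 z2. 0)" by (rule exfourier_zero)
    show "\<And>f g. (\<lambda>f. \<exists>c. fourier_herm m c f) f \<Longrightarrow> (\<lambda>f. \<exists>c. fourier_herm m c f) g \<Longrightarrow> (\<lambda>f. \<exists>c. fourier_herm m c f) (\<lambda>\<tau> z1 z2. f \<tau> z1 z2 + g \<tau> z1 z2)"
      by (rule exfourier_add)
    show "finite gauss_units" by (rule finite_gauss_units)
    show "\<forall>\<epsilon>\<in>gauss_units. (\<lambda>f. \<exists>c. fourier_herm m c f) (slash_unit ?k \<epsilon> ?\<psi>)"
      using slash_unit_fourier[OF _ fourier_psi[OF c]] by blast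
  qed
  have hj: "herm_jacobi_form ?k m (H_lift ?k \<phi>1 \<phi>2)"
    unfolding hjf_iff using hol mi ti fo by blast
  moreover have "herm_jacobi_cusp_form ?k m (H_lift ?k \<phi>1 \<phi>2)"
    if cu: "jacobi_cusp_form k1 m \<phi>1 \<and> jacobi_cusp_form k2 m \<phi>2"
  proof -
    obtain d1 d2 where d: "fourier_classical m d1 \<phi>1" "\<forall>n r. 4 * int n * int m = r ^ 2 \<longrightarrow> d1 (n, r) = 0"
      "fourier_classical m d2 \<phi>2" "\<forall>n r. 4 * int n * int m = r ^ 2 \<longrightarrow> d2 (n, r) = 0"
      using cu unfolding jacobi_cusp_form_def by blast
    have fc: "fcusp m ?\<psi>"
      unfolding fcusp_def using fourier_psi[OF d(1,3)] Cco_cusp[OF d(2)] by blast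
    have "fcusp m (H_lift ?k \<phi>1 \<phi>2)"
      unfolding Heq
    proof (rule sum_closed[of "fcusp m"])
      show "fcusp m (\<lambda>\<tau> z1 z2. 0)" by (rule fcusp_zero)
      show "\<And>f g. fcusp m f \<Longrightarrow> fcusp m g \<Longrightarrow> fcusp m (\<lambda>\<tau> z1 z2. f \<tau> z1 z2 + g \<tau> z1 z2)"
        by (rule fcusp_add)
      show "finite gauss_units" by (rule finite_gauss_units)
      show "\<forall>\<epsilon>\<in>gauss_units. fcusp m (slash_unit ?k \<epsilon> ?\<psi>)"
        using slash_unit_fcusp[OF _ fc] by blast
    qed
    then show ?thesis unfolding hjcf_iff using hj by blast
  qed
  ultimately show ?thesis by blast
qed



end
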